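(* Let $A_1,\dots,A_{20}$ be the vertices of a regular dodecahedron in $\mathbb R^3$ with centre $O$, and let $\Gamma$ be any sphere centred at $O$ (of positive radius). There are at most nine real numbers $\lambda$ for which the function $M\mapsto\sum_{i=1}^{20}|MA_i|^{\lambda}$ is constant on $\Gamma\setminus\{A_1,\dots,A_{20}\}$.
   Context: $|MA|$ denotes Euclidean distance. *)

theory Defs
  imports "HOL-Analysis.Analysis"
begin

definition golden :: real where
  "golden = (1 + sqrt 5) / 2"

definition std_dodeca :: "(real^3) set" where
  "std_dodeca =
     {vector [a, b, c] | a b c. a \<in> {-1, 1} \<and> b \<in> {-1, 1} \<and> c \<in> {-1, 1}}
   \<union> {vector [0, a / golden, b * golden] | a b. a \<in> {-1, 1} \<and> b \<in> {-1, 1}}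
   \<union> {vector [a / golden, b * golden, 0] | a b. a \<in> {-1, 1} \<and> b \<in> {-1, 1}}
   \<union> {vector [a * golden, 0, b / golden] | a b. a \<in> {-1, 1} \<and> b \<in> {-1, 1}}"

definition regular_dodecahedron :: "(real^3) set \<Rightarrow> real^3 \<Rightarrow> bool" where
  "regular_dodecahedron V C \<longleftrightarrow>
     (\<exists>f r. orthogonal_transformation f \<and> r > 0 \<and> V = (\<lambda>x. C + r *\<^sub>R f x) ` std_dodeca)"

end

theory Submission
  imports Defs
begin


lemma rolle_many:
  fixes h h' :: "real \<Rightarrow> real"
  assumes der: "\<And>x. (h has_real_derivative h' x) (at x)"
  and fin: "finite S"
  shows "S \<noteq> {} \<longrightarrow> (\<forall>s\<in>S. h s = 0) \<longrightarrow>
     (\<exists>T. finite T \<and> card T = card S - 1 \<and> (\<forall>x\<in>T. h' x = 0 \<and> x < Max S))"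
  using fin
proof (induction S rule: finite_linorder_max_induct)
  case empty
  then show ?case by simp
next
  case (insert b A)
  show ?case
  proof (intro impI)
    assume z: "\<forall>s\<in>insert b A. h s = 0"
    have bA: "b \<notin> A" using insert by auto
    show "\<exists>T. finite T \<and> card T = card (insert b A) - 1 \<and> (\<forall>x\<in>T. h' x = 0 \<and> x < Max (insert b A))"
    proof (cases "A = {}")
      case True
      then show ?thesis by (intro exI[of _ "{}"]) simp
    next
      case False
      from insert.IH False z obtain T where T: "finite T" "card T = card A - 1"
        "\<forall>x\<in>T. h' x = 0 \<and> x < Max A" by auto
      have mA: "Max A \<in> A" using False insert.hyps(1) by simp
      have lt: "Max A < b" using insert.hyps(2) mA by auto
      have "Max (insert b A) = max b (Max A)" using insert.hyps False by simp
      then have Mx: "Max (insert b A) = b" using lt by simp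
      have cont: "continuous_on {Max A..b} h"
        using der by (meson DERIV_isCont continuous_at_imp_continuous_on)
      have "\<exists>z>Max A. z < b \<and> (h has_real_derivative 0) (at z)"
        by (rule Rolle[OF lt]) (use z mA cont der in \<open>auto simp: real_differentiable_def\<close>)
      then obtain zz where zz: "Max A < zz" "zz < b" "(h has_real_derivative 0) (at zz)" by auto
      have h0: "h' zz = 0" using DERIV_unique[OF der zz(3)] .
      have nz: "zz \<notin> T" using T(3) zz(1) by auto
      have cA: "card A \<ge> 1" using False insert.hyps(1) by (simp add: Suc_leI card_gt_0_iff)
      show ?thesis
        apply (rule exI[of _ "insert zz T"])
        using T nz zz h0 Mx bA insert.hyps(1) cA lt by auto
    qed
  qed
qed

lemma exp_sum_zeros_aux:
  fixes J :: "'a set"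
  assumes "finite J"
  shows "\<forall>(a::'a\<Rightarrow>real) (l::'a\<Rightarrow>real) (S::real set). finite S \<longrightarrow> (\<forall>t\<in>S. (\<Sum>j\<in>J. a j * exp (l j * t)) = 0)
     \<longrightarrow> (\<exists>t. (\<Sum>j\<in>J. a j * exp (l j * t)) \<noteq> 0) \<longrightarrow> card S < card J"
  using assms
proof (induction J rule: finite_induct)
  case empty
  then show ?case by simp
next
  case (insert j0 J)
  show ?case
  proof (intro allI impI)
    fix a l and S :: "real set"
    assume fS: "finite S" and zS: "\<forall>t\<in>S. (\<Sum>j\<in>insert j0 J. a j * exp (l j * t)) = 0"
      and nz: "\<exists>t. (\<Sum>j\<in>insert j0 J. a j * exp (l j * t)) \<noteq> 0"
    define h where "h t = a j0 + (\<Sum>j\<in>J. a j * exp ((l j - l j0) * t))" for t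
    define h' where "h' t = (\<Sum>j\<in>J. (a j * (l j - l j0)) * exp ((l j - l j0) * t))" for t
    have hf: "h t = exp (- l j0 * t) * (\<Sum>j\<in>insert j0 J. a j * exp (l j * t))" for t
      using insert.hyps
      by (simp add: h_def sum_distrib_left algebra_simps flip: exp_add)
    have der: "(h has_real_derivative h' x) (at x)" for x
      unfolding h_def h'_def
      by (auto intro!: derivative_eq_intros DERIV_sum simp: algebra_simps)
    show "card S < card (insert j0 J)"
    proof (cases "S = {}")
      case True
      then show ?thesis using insert.hyps by simp
    next
      case False
      have hz: "\<forall>s\<in>S. h s = 0" using zS hf by simp
      from rolle_many[OF der fS] False hz obtain T where
        T: "finite T" "card T = card S - 1" "\<forall>x\<in>T. h' x = 0" by blast
      show ?thesis
      proof (cases "\<exists>t. h' t \<noteq> 0")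
        case True
        have "card T < card J"
          using insert.IH[rule_format, of T "\<lambda>j. a j * (l j - l j0)" "\<lambda>j. l j - l j0"] T True
          unfolding h'_def by auto
        then show ?thesis using T(2) insert.hyps False fS
          by (simp add: card_gt_0_iff)
      next
        case False
        then have "\<forall>x. (h has_real_derivative 0) (at x)" using der by auto
        then have hc: "h x = h y" for x y by (rule DERIV_isconst_all)
        obtain s0 where "s0 \<in> S" using \<open>S \<noteq> {}\<close> by auto
        then have "h x = 0" for x using hz hc by metis
        then have "(\<Sum>j\<in>insert j0 J. a j * exp (l j * x)) = 0" for x using hf by simp
        then show ?thesis using nz by blast
      qed
    qed
  qed
qed



lemma golden_gt1: "golden > 1"
  unfolding golden_def
proof -
  have "sqrt 5 > 1" by simp
  then show "(1 + sqrt 5) / 2 > 1" by simp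
qed

lemma golden_sq: "golden * golden = golden + 1"
  unfolding golden_def by (simp add: field_simps)

lemma golden_inv: "1 / golden = golden - 1"
  using golden_gt1 golden_sq by (simp add: field_simps)

lemma golden_inv2: "inverse golden = golden - 1"
  using golden_inv by (simp add: inverse_eq_divide)

lemma std_props:
  assumes "v \<in> std_dodeca"
  shows "inner v v = 3 \<and> inner (vector [1,1,1]) v \<in> {3,1,-1,-3, 2*golden-1, 1-2*golden}
     \<and> inner (vector [0,golden,1]) v \<in> {golden+1, golden-1, 1-golden, -golden-1}"
  using assms unfolding std_dodeca_def
  by (auto simp: inner_vec_def sum_3 golden_inv golden_sq divide_inverse golden_inv2 algebra_simps)

lemma exp_sum_zeros:
  fixes J :: "'a set" and a l :: "'a \<Rightarrow> real"
  assumes fin: "finite J" and nz: "\<exists>t. (\<Sum>j\<in>J. a j * exp (l j * t)) \<noteq> 0"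
  shows "finite {t. (\<Sum>j\<in>J. a j * exp (l j * t)) = 0}
      \<and> card {t. (\<Sum>j\<in>J. a j * exp (l j * t)) = 0} < card J"
proof -
  let ?Z = "{t. (\<Sum>j\<in>J. a j * exp (l j * t)) = 0}"
  have key: "card S < card J" if "finite S" "S \<subseteq> ?Z" for S
    using exp_sum_zeros_aux[OF fin, rule_format, of S a l] that nz by auto
  have fZ: "finite ?Z"
  proof (rule ccontr)
    assume "infinite ?Z"
    then obtain S where "S \<subseteq> ?Z" "finite S" "card S = card J"
      using infinite_arbitrarily_large by blast
    then show False using key by fastforce
  qed
  then show ?thesis using key[of ?Z] by auto
qed

lemma group_sum:
  fixes dv :: "'v \<Rightarrow> real"
  assumes "finite S0" "\<And>v. v \<in> S0 \<Longrightarrow> dv v \<ge> 0"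
  shows "(\<Sum>v\<in>S0. dv v powr t) =
    (\<Sum>d\<in>dv ` S0 - {0}. real (card {v\<in>S0. dv v = d}) * exp (ln d * t))"
proof -
  have "(\<Sum>v\<in>S0. dv v powr t) = (\<Sum>d\<in>dv ` S0. \<Sum>v\<in>{x\<in>S0. dv x = d}. dv v powr t)"
    by (rule sum.image_gen[OF assms(1)])
  also have "\<dots> = (\<Sum>d\<in>dv ` S0. real (card {v\<in>S0. dv v = d}) * d powr t)"
    by (rule sum.cong) auto
  also have "\<dots> = (\<Sum>d\<in>dv ` S0 - {0}. real (card {v\<in>S0. dv v = d}) * d powr t)"
    by (rule sum.mono_neutral_right) (use assms(1) in auto)
  also have "\<dots> = (\<Sum>d\<in>dv ` S0 - {0}. real (card {v\<in>S0. dv v = d}) * exp (ln d * t))"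
  proof (rule sum.cong)
    fix d assume "d \<in> dv ` S0 - {0}"
    then have "d > 0" using assms(2) by force
    then show "real (card {v\<in>S0. dv v = d}) * d powr t = real (card {v\<in>S0. dv v = d}) * exp (ln d * t)"
      by (simp add: powr_def mult.commute)
  qed simp
  finally show ?thesis .
qed

lemma v0_mem: "vector [1,1,1] \<in> std_dodeca"
  unfolding std_dodeca_def by blast

lemma vm_mem: "vector [-1,-1,-1] \<in> std_dodeca"
  unfolding std_dodeca_def by blast

lemma dist_formula:
  assumes "v \<in> std_dodeca"
  shows "norm (s *\<^sub>R u - r *\<^sub>R v) = sqrt (s^2 * (u \<bullet> u) - 2 * r * s * (u \<bullet> v) + 3 * r^2)"
proof -
  have vv: "v \<bullet> v = 3" using std_props[OF assms] by simp
  show ?thesis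
    unfolding norm_eq_sqrt_inner
    by (simp add: inner_diff_left inner_diff_right vv inner_commute power2_eq_square algebra_simps)
qed

lemma golden_key: "golden + 1 < sqrt 3 * sqrt (golden + 2)"
proof -
  have "(golden + 1)^2 < 3 * (golden + 2)"
    using golden_sq golden_gt1 by (simp add: power2_eq_square algebra_simps)
  then have "golden + 1 < sqrt (3 * (golden + 2))"
    using golden_gt1 by (simp add: real_less_rsqrt)
  then show ?thesis by (simp only: real_sqrt_mult)
qed


lemma card_img_list: "card (g ` set xs) \<le> length xs"
  using card_image_le[of "set xs" g] card_length[of xs] by simp

lemma card_sub_img_list: "X \<subseteq> g ` set xs \<Longrightarrow> card X \<le> length xs"
  by (meson card_img_list card_mono finite_imageI finite_set order.trans)

theorem mainTheorem8:
  fixes A :: "nat \<Rightarrow> real^3" and C :: "real^3" and R :: real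
  assumes "regular_dodecahedron (A ` {1..20}) C"
    and "inj_on A {1..20}"
    and "R > 0"
  shows "finite {t::real. \<exists>c. \<forall>M \<in> sphere C R - A ` {1..20}.
                    (\<Sum>i=1..20. dist M (A i) powr t) = c}
       \<and> card {t::real. \<exists>c. \<forall>M \<in> sphere C R - A ` {1..20}.
                    (\<Sum>i=1..20. dist M (A i) powr t) = c} \<le> 9"
proof -
  let ?T = "{t::real. \<exists>c. \<forall>M \<in> sphere C R - A ` {1..20}.
                    (\<Sum>i=1..20. dist M (A i) powr t) = c}"
  let ?V = "A ` {1..20}"
  obtain f r where orth: "orthogonal_transformation f" and r0: "r > 0"
    and Veq: "?V = (\<lambda>x. C + r *\<^sub>R f x) ` std_dodeca"
    using assms(1) unfolding regular_dodecahedron_def by blast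
  define G where "G x = C + r *\<^sub>R f x" for x
  have lin: "linear f" using orth by (rule orthogonal_transformation_linear)
  have injf: "inj f" using orth by (rule orthogonal_transformation_inj)
  have injG: "inj G"
    unfolding G_def inj_def using r0 injf by (auto dest: injD)
  have VG: "?V = G ` std_dodeca" using Veq unfolding G_def by simp
  have finstd: "finite std_dodeca"
    using VG injG by (metis finite_imageD finite_imageI finite_atLeastAtMost inj_on_subset subset_UNIV)
  have cardstd: "card std_dodeca = 20"
  proof -
    have "card ?V = 20" using assms(2) by (simp add: card_image)
    moreover have "card (G ` std_dodeca) = card std_dodeca"
      using injG by (simp add: card_image inj_on_subset)
    ultimately show ?thesis using VG by simp
  qed
  define \<Phi> where "\<Phi> p t = (\<Sum>v\<in>std_dodeca. norm (p - r *\<^sub>R v) powr t)" for p t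
  have Fsum: "(\<Sum>i=1..20. dist (C + f p) (A i) powr t) = \<Phi> p t" for p t
  proof -
    have "(\<Sum>i=1..20. dist (C + f p) (A i) powr t) = (\<Sum>y\<in>?V. dist (C + f p) y powr t)"
      using assms(2) by (simp add: sum.reindex)
    also have "\<dots> = (\<Sum>y\<in>G ` std_dodeca. dist (C + f p) y powr t)" using VG by simp
    also have "\<dots> = (\<Sum>v\<in>std_dodeca. dist (C + f p) (G v) powr t)"
      using injG by (simp add: sum.reindex inj_on_subset)
    also have "\<dots> = \<Phi> p t"
    proof -
      have "dist (C + f p) (G v) = norm (p - r *\<^sub>R v)" for v
      proof -
        have "dist (C + f p) (G v) = norm (f p - r *\<^sub>R f v)" unfolding G_def dist_norm by simp
        also have "f p - r *\<^sub>R f v = f (p - r *\<^sub>R v)" using lin by (simp add: linear_diff linear_cmul)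
        finally show ?thesis using orthogonal_transformation_norm[OF orth] by simp
      qed
      then show ?thesis unfolding \<Phi>_def by simp
    qed
    finally show ?thesis .
  qed
  have sph: "C + f p \<in> sphere C R" if "norm p = R" for p
    using orthogonal_transformation_norm[OF orth, of p] that by (simp add: dist_norm)
  have vert: "C + f p \<in> ?V \<Longrightarrow> \<exists>v\<in>std_dodeca. p = r *\<^sub>R v" for p
  proof -
    assume "C + f p \<in> ?V"
    then obtain v where v: "v \<in> std_dodeca" "C + f p = C + r *\<^sub>R f v" using VG G_def by auto
    then have "f p = f (r *\<^sub>R v)" using lin by (simp add: linear_cmul)
    then have "p = r *\<^sub>R v" using injf by (simp add: inj_eq)
    then show ?thesis using v by blast
  qed
  have normv: "norm v = sqrt 3" if "v \<in> std_dodeca" for v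
    using std_props[OF that] by (simp add: norm_eq_sqrt_inner)
  define u1 :: "real^3" where "u1 = vector [1,1,1]"
  define u2 :: "real^3" where "u2 = vector [0,golden,1]"
  define s1 where "s1 = R / sqrt 3"
  define s2 where "s2 = R / sqrt (golden + 2)"
  define p1 where "p1 = s1 *\<^sub>R u1"
  define p2 where "p2 = s2 *\<^sub>R u2"
  have u1u1: "u1 \<bullet> u1 = 3" unfolding u1_def by (simp add: inner_vec_def sum_3)
  have u2u2: "u2 \<bullet> u2 = golden + 2" unfolding u2_def
    using golden_sq by (simp add: inner_vec_def sum_3)
  have g2: "golden + 2 > 0" using golden_gt1 by simp
  have s1sq: "s1^2 * 3 = R^2" unfolding s1_def by (simp add: power_divide)
  have s2sq: "s2^2 * (golden + 2) = R^2" unfolding s2_def using g2 by (simp add: power_divide)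
  have np1: "norm p1 = R"
  proof -
    have "p1 \<bullet> p1 = R^2" unfolding p1_def using u1u1 s1sq by (simp add: power2_eq_square algebra_simps)
    then show ?thesis using assms(3) by (simp add: norm_eq_sqrt_inner)
  qed
  have np2: "norm p2 = R"
  proof -
    have "p2 \<bullet> p2 = R^2" unfolding p2_def using u2u2 s2sq by (simp add: power2_eq_square algebra_simps)
    then show ?thesis using assms(3) by (simp add: norm_eq_sqrt_inner)
  qed
  have d1: "norm (p1 - r *\<^sub>R v) = sqrt (R^2 - 2 * r * s1 * (u1 \<bullet> v) + 3 * r^2)"
    if "v \<in> std_dodeca" for v
    unfolding p1_def using dist_formula[OF that] u1u1 s1sq by simp
  have d2: "norm (p2 - r *\<^sub>R v) = sqrt (R^2 - 2 * r * s2 * (u2 \<bullet> v) + 3 * r^2)"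
    if "v \<in> std_dodeca" for v
    unfolding p2_def using dist_formula[OF that] u2u2 s2sq by simp
  define dv1 where "dv1 v = norm (p1 - r *\<^sub>R v)" for v
  define dv2 where "dv2 v = norm (p2 - r *\<^sub>R v)" for v
  define D1 where "D1 = dv1 ` std_dodeca - {0}"
  define D2 where "D2 = dv2 ` std_dodeca - {0}"
  define c1 where "c1 d = real (card {v\<in>std_dodeca. dv1 v = d})" for d
  define c2 where "c2 d = real (card {v\<in>std_dodeca. dv2 v = d})" for d
  have Phi1: "\<Phi> p1 t = (\<Sum>d\<in>D1. c1 d * exp (ln d * t))" for t
    unfolding \<Phi>_def D1_def c1_def dv1_def by (rule group_sum[OF finstd]) simp
  have Phi2: "\<Phi> p2 t = (\<Sum>d\<in>D2. c2 d * exp (ln d * t))" for t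
    unfolding \<Phi>_def D2_def c2_def dv2_def by (rule group_sum[OF finstd]) simp
  have finD1: "finite D1" "finite D2" unfolding D1_def D2_def using finstd by auto
  define J where "J = D1 <+> D2"
  define a where "a = case_sum c1 (\<lambda>d. - c2 d)"
  define l where "l = case_sum (\<lambda>d. ln d) (\<lambda>d::real. ln d)"
  have gform: "\<Phi> p1 t - \<Phi> p2 t = (\<Sum>j\<in>J. a j * exp (l j * t))" for t
    unfolding J_def Phi1 Phi2 using finD1
    by (simp add: sum.Plus a_def l_def comp_def sum_negf)
  have finJ: "finite J" unfolding J_def using finD1 by simp
  have cardJ: "card J = card D1 + card D2" unfolding J_def using finD1 by (simp add: card_Plus)
  have c1img: "dv1 ` std_dodeca \<subseteq> (\<lambda>k. sqrt (R^2 - 2 * r * s1 * k + 3 * r^2)) ` set [3,1,-1,-3, 2*golden-1, 1-2*golden]"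
  proof
    fix x assume "x \<in> dv1 ` std_dodeca"
    then obtain v where v: "v \<in> std_dodeca" "x = dv1 v" by auto
    have "u1 \<bullet> v \<in> set [3,1,-1,-3, 2*golden-1, 1-2*golden]"
      using std_props[OF v(1)] unfolding u1_def by simp
    then show "x \<in> (\<lambda>k. sqrt (R^2 - 2 * r * s1 * k + 3 * r^2)) ` set [3,1,-1,-3, 2*golden-1, 1-2*golden]"
      using v d1 unfolding dv1_def by blast
  qed
  have c2img: "dv2 ` std_dodeca \<subseteq> (\<lambda>k. sqrt (R^2 - 2 * r * s2 * k + 3 * r^2)) ` set [golden+1, golden-1, 1-golden, -golden-1]"
  proof
    fix x assume "x \<in> dv2 ` std_dodeca"
    then obtain v where v: "v \<in> std_dodeca" "x = dv2 v" by auto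
    have "u2 \<bullet> v \<in> set [golden+1, golden-1, 1-golden, -golden-1]"
      using std_props[OF v(1)] unfolding u2_def by simp
    then show "x \<in> (\<lambda>k. sqrt (R^2 - 2 * r * s2 * k + 3 * r^2)) ` set [golden+1, golden-1, 1-golden, -golden-1]"
      using v d2 unfolding dv2_def by blast
  qed
  have card1: "card (dv1 ` std_dodeca) \<le> 6"
    using card_sub_img_list[OF c1img] by simp
  have card2: "card D2 \<le> 4"
  proof -
    have "card (dv2 ` std_dodeca) \<le> 4"
      using card_sub_img_list[OF c2img] by simp
    then show ?thesis unfolding D2_def using finstd by (meson card_Diff1_le finite_imageI order.trans)
  qed
  define B where "B = R + sqrt 3 * r"
  define Q where "Q = sqrt (R^2 + 2 * r * s2 * (golden + 1) + 3 * r^2)"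
  have B0: "B > 0" unfolding B_def using assms(3) r0 by (simp add: add_pos_pos)
  have Q0: "Q > 0" unfolding Q_def using assms(3) r0 golden_gt1 g2
    by (intro real_sqrt_gt_zero) (simp add: s2_def add_pos_pos)
  have dvm: "dv1 (vector [-1,-1,-1]) = B"
  proof -
    have "u1 \<bullet> vector [-1,-1,-1] = -3" unfolding u1_def by (simp add: inner_vec_def sum_3)
    moreover have "6 * r * s1 = 2 * sqrt 3 * r * R"
    proof -
      have "6 = 2 * sqrt 3 * sqrt 3" by simp
      then show ?thesis unfolding s1_def by (simp add: field_simps)
    qed
    ultimately have "dv1 (vector [-1,-1,-1]) = sqrt ((R + sqrt 3 * r)^2)"
      unfolding dv1_def using d1[OF vm_mem] by (simp add: power2_eq_square algebra_simps)
    then show ?thesis unfolding B_def using assms(3) r0 by simp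
  qed
  have dv2Q: "dv2 v \<le> Q" if "v \<in> std_dodeca" for v
  proof -
    have "u2 \<bullet> v \<ge> - golden - 1" using std_props[OF that] golden_gt1 unfolding u2_def by auto
    moreover have "0 \<le> 2 * r * s2" using r0 assms(3) g2 unfolding s2_def by simp
    ultimately have "2 * r * s2 * (- (u2 \<bullet> v)) \<le> 2 * r * s2 * (golden + 1)"
      by (intro mult_left_mono) auto
    then have "- 2 * r * s2 * (u2 \<bullet> v) \<le> 2 * r * s2 * (golden + 1)" by simp
    then show ?thesis unfolding dv2_def d2[OF that] Q_def by simp
  qed
  have QB: "Q < B"
  proof -
    have "s2 * (golden + 1) < sqrt 3 * R"
    proof -
      have "(golden + 1) / sqrt (golden + 2) < sqrt 3"
        using golden_key g2 by (simp add: divide_less_eq)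
      then have "R * ((golden + 1) / sqrt (golden + 2)) < R * sqrt 3"
        using assms(3) by (intro mult_strict_left_mono)
      moreover have "s2 * (golden + 1) = R * ((golden + 1) / sqrt (golden + 2))"
        unfolding s2_def by simp
      ultimately show ?thesis by (simp add: mult.commute)
    qed
    then have "(2 * r) * (s2 * (golden + 1)) < (2 * r) * (sqrt 3 * R)"
      using r0 by (intro mult_strict_left_mono) auto
    then have "R^2 + 2 * r * s2 * (golden + 1) + 3 * r^2 < (R + sqrt 3 * r)^2"
      by (simp add: power2_eq_square algebra_simps)
    then have "Q < sqrt ((R + sqrt 3 * r)^2)" unfolding Q_def by (simp only: real_sqrt_less_iff)
    then show ?thesis unfolding B_def using assms(3) r0 by simp
  qed
  have nz: "\<exists>t. (\<Sum>j\<in>J. a j * exp (l j * t)) \<noteq> 0"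
  proof -
    have "1 < B / Q" using QB Q0 by simp
    then obtain n where n: "20 < (B / Q) ^ n" using real_arch_pow by blast
    have "20 * Q ^ n < B ^ n"
    proof -
      have "20 * Q ^ n < (B / Q) ^ n * Q ^ n" using n Q0 by simp
      also have "\<dots> = B ^ n" using Q0 by (simp add: power_divide)
      finally show ?thesis .
    qed
    moreover have "B ^ n \<le> \<Phi> p1 (real n)"
    proof -
      have "dv1 (vector [-1,-1,-1]) powr real n \<le> \<Phi> p1 (real n)"
        unfolding \<Phi>_def dv1_def by (rule member_le_sum[OF vm_mem _ finstd]) simp
      then show ?thesis using dvm B0 by (simp add: powr_realpow)
    qed
    moreover have "\<Phi> p2 (real n) \<le> 20 * Q ^ n"
    proof -
      have "\<Phi> p2 (real n) \<le> (\<Sum>v\<in>std_dodeca. Q powr real n)"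
        unfolding \<Phi>_def
        by (rule sum_mono, rule powr_mono2) (use dv2Q in \<open>auto simp: dv2_def\<close>)
      then show ?thesis using cardstd Q0 by (simp add: powr_realpow)
    qed
    ultimately have "\<Phi> p1 (real n) - \<Phi> p2 (real n) \<noteq> 0" by linarith
    then show ?thesis using gform by metis
  qed
  have Zfin: "finite {t. (\<Sum>j\<in>J. a j * exp (l j * t)) = 0}"
    and Zcard: "card {t. (\<Sum>j\<in>J. a j * exp (l j * t)) = 0} < card J"
    using exp_sum_zeros[OF finJ nz] by auto
  let ?Z = "{t. (\<Sum>j\<in>J. a j * exp (l j * t)) = 0}"
  let ?S = "sphere C R - ?V"
  define M1 where "M1 = C + f p1"
  define M2 where "M2 = C + f p2"
  have M1s: "M1 \<in> sphere C R" unfolding M1_def using sph np1 by simp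
  have M2S: "M2 \<in> ?S"
  proof -
    have "M2 \<notin> ?V"
    proof
      assume "M2 \<in> ?V"
      then obtain v where v: "v \<in> std_dodeca" "p2 = r *\<^sub>R v" using vert unfolding M2_def by blast
      then have Rr: "R = r * sqrt 3" using np2 normv[OF v(1)] r0 by simp
      have "u2 \<bullet> p2 = s2 * (golden + 2)" unfolding p2_def using u2u2 by simp
      also have "s2 * (golden + 2) = R * sqrt (golden + 2)"
        unfolding s2_def using g2 by (simp add: field_simps real_sqrt_mult[symmetric] flip: real_sqrt_mult)
      finally have e1: "u2 \<bullet> p2 = r * (sqrt 3 * sqrt (golden + 2))" using Rr by simp
      have "u2 \<bullet> v \<le> golden + 1" using std_props[OF v(1)] golden_gt1 unfolding u2_def by auto
      then have "u2 \<bullet> p2 \<le> r * (golden + 1)" using v(2) r0 by (simp add: mult_left_mono)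
      then have "sqrt 3 * sqrt (golden + 2) \<le> golden + 1" using e1 r0 by simp
      then show False using golden_key by simp
    qed
    then show ?thesis unfolding M2_def using sph np2 by simp
  qed
  have TZ: "\<Phi> p1 t = \<Phi> p2 t \<Longrightarrow> t \<in> ?Z" for t using gform[of t] by simp
  have cardD1: "card D1 \<le> 6" unfolding D1_def using card1 finstd
    by (meson card_Diff1_le finite_imageI order.trans)
  show ?thesis
  proof (cases "R = sqrt 3 * r")
    case False
    have M1S: "M1 \<in> ?S"
    proof -
      have "M1 \<notin> ?V"
      proof
        assume "M1 \<in> ?V"
        then obtain v where v: "v \<in> std_dodeca" "p1 = r *\<^sub>R v" using vert unfolding M1_def by blast
        then have "R = r * sqrt 3" using np1 normv[OF v(1)] r0 by simp
        then show False using False by (simp add: mult.commute)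
      qed
      then show ?thesis using M1s by simp
    qed
    have sub: "?T \<subseteq> ?Z"
    proof
      fix t assume "t \<in> ?T"
      then obtain c where c: "\<forall>M\<in>?S. (\<Sum>i=1..20. dist M (A i) powr t) = c" by blast
      have "\<Phi> p1 t = c" using c M1S Fsum unfolding M1_def by metis
      moreover have "\<Phi> p2 t = c" using c M2S Fsum unfolding M2_def by metis
      ultimately show "t \<in> ?Z" using TZ by simp
    qed
    have "card ?Z \<le> 9" using Zcard cardJ cardD1 card2 by simp
    then show ?thesis using sub Zfin card_mono finite_subset by (metis (no_types, lifting) order.trans)
  next
    case True
    have s1r: "s1 = r" unfolding s1_def True by simp
    have p1u: "p1 = r *\<^sub>R u1" unfolding p1_def s1r ..
    have M1V: "M1 \<in> ?V" unfolding M1_def VG G_def p1u using v0_mem lin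
      unfolding u1_def by (auto simp: linear_cmul)
    then obtain i0 where i0: "i0 \<in> {1..20}" "A i0 = M1" by auto
    have zero_in: "0 \<in> dv1 ` std_dodeca"
      using v0_mem unfolding dv1_def p1u u1_def by force
    have cD1: "card D1 \<le> 5"
    proof -
      have "card D1 = card (dv1 ` std_dodeca) - 1" unfolding D1_def using zero_in finstd by simp
      then show ?thesis using card1 by simp
    qed
    have lim: "M1 islimpt ?S"
    proof -
      have "M1 islimpt sphere C R"
      proof (rule connected_imp_perfect)
        show "connected (sphere C R)" by (rule connected_sphere) simp
        show "M1 \<in> sphere C R" by (rule M1s)
        fix x
        have "C - f p1 \<in> sphere C R"
          using orthogonal_transformation_norm[OF orth, of p1] np1 by (simp add: dist_norm)
        moreover have "C - f p1 \<noteq> M1"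
        proof
          assume "C - f p1 = M1"
          then have "(C + f p1) - (C - f p1) = 0" unfolding M1_def by simp
          moreover have "(C + f p1) - (C - f p1) = 2 *\<^sub>R f p1" by (simp add: scaleR_2)
          ultimately have "f p1 = 0" by simp
          then show False using orthogonal_transformation_norm[OF orth, of p1] np1 assms(3) by simp
        qed
        ultimately show "sphere C R \<noteq> {x}" using M1s by (metis singletonD)
      qed
      moreover have "sphere C R = ?S \<union> (sphere C R \<inter> ?V)" by auto
      ultimately have "M1 islimpt ?S \<union> (sphere C R \<inter> ?V)" by simp
      then show ?thesis using islimpt_Un islimpt_finite[of "sphere C R \<inter> ?V"] by auto
    qed
    have sub: "?T \<subseteq> insert 0 ?Z"
    proof
      fix t assume "t \<in> ?T"
      then obtain c where c: "\<forall>M\<in>?S. (\<Sum>i=1..20. dist M (A i) powr t) = c" by blast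
      define F where "F M = (\<Sum>i=1..20. dist M (A i) powr t)" for M
      have Fc: "\<forall>M\<in>?S. F M = c" using c unfolding F_def by simp
      show "t \<in> insert 0 ?Z"
      proof (cases "t = 0")
        case True then show ?thesis by simp
      next
        case tnz: False
        have "F M1 = c"
        proof (cases "t > 0")
          case True
          have "(F \<longlongrightarrow> F M1) (at M1 within ?S)"
            unfolding F_def
            by (intro tendsto_sum tendsto_powr' tendsto_dist tendsto_ident_at tendsto_const)
               (use True in auto)
          moreover have "(F \<longlongrightarrow> c) (at M1 within ?S)"
          proof -
            have "\<forall>\<^sub>F x in at M1 within ?S. c = F x"
              using Fc unfolding eventually_at_filter by (auto intro: always_eventually)
            then show ?thesis using tendsto_cong[of "\<lambda>_. c" F] by auto
          qed
          moreover have "at M1 within ?S \<noteq> bot" using lim trivial_limit_within by blast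
          ultimately show ?thesis by (intro tendsto_unique[of "at M1 within ?S" F]) auto
        next
          case False
          then have tn: "t < 0" using tnz by simp
          define e where "e = (\<bar>c\<bar> + 1) powr (1 / t)"
          have e0: "e > 0" unfolding e_def by simp
          obtain M where M: "M \<in> ?S" "M \<noteq> M1" "dist M M1 < e"
            using lim e0 unfolding islimpt_approachable by blast
          have dpos: "dist M M1 > 0" using M(2) by simp
          have "e powr t = \<bar>c\<bar> + 1" unfolding e_def using tn by (simp add: powr_powr)
          moreover have "e powr t < dist M M1 powr t"
            using powr_less_mono2_neg[OF tn dpos M(3)] .
          moreover have "dist M (A i0) powr t \<le> F M"
            unfolding F_def by (rule member_le_sum[OF i0(1)]) auto
          moreover have "F M = c" using Fc M(1) by simp
          ultimately have False using i0(2) by (simp add: dist_commute)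
          then show ?thesis ..
        qed
        then have "\<Phi> p1 t = c" using Fsum unfolding F_def M1_def by metis
        moreover have "\<Phi> p2 t = c" using Fc M2S Fsum unfolding F_def M2_def by metis
        ultimately show ?thesis using TZ by simp
      qed
    qed
    have "card ?Z \<le> 8" using Zcard cardJ cD1 card2 by simp
    then have "card (insert 0 ?Z) \<le> 9" using Zfin
      by (simp add: card_insert_if)
    then show ?thesis using sub Zfin card_mono finite_subset
      by (metis (no_types, lifting) finite_insert order.trans)
  qed
qed

end
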